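(* Let $\gamma>0$, $\upsilon>0$ and $0<p_1<p_2<1$. Let $X\sim \mathrm{RBTLL}(\gamma,\upsilon,p_1)$ and $Y\sim \mathrm{RBTLL}(\gamma,\upsilon,p_2)$, with densities $f_X$ and $f_Y$. Then $X$ is smaller than $Y$ in the likelihood ratio order; that is, the function $x\mapsto f_X(x)/f_Y(x)$ is decreasing on $(0,\infty)$.
   Context: The log-logistic distribution with parameters $\gamma,\upsilon>0$ has CDF $G(x)=\frac{e^{\gamma}x^{\upsilon}}{1+e^{\gamma}x^{\upsilon}}$ and PDF $g(x)=\frac{e^{\gamma}\upsilon x^{\upsilon-1}}{(1+e^{\gamma}x^{\upsilon})^2}$, $x>0$. The record-based transmuted log-logistic distribution $\mathrm{RBTLL}(\gamma,\upsilon,p)$, with $\gamma,\upsilon>0$ and $0<p<1$, is the distribution on $(0,\infty)$ with CDF $F(x)=G(x)+p\,(1-G(x))\log(1-G(x))$ and PDF \[ f(x)=\frac{e^{\gamma}\upsilon x^{\upsilon-1}}{(1+e^{\gamma}x^{\upsilon})^2}\left[1+p\left(\log(1+e^{\gamma}x^{\upsilon})-1\right)\right],\qquad x>0. \] *)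

theory Defs
  imports "HOL-Analysis.Analysis"
begin

definition rbtll_pdf :: "real \<Rightarrow> real \<Rightarrow> real \<Rightarrow> real \<Rightarrow> real" where
  "rbtll_pdf \<gamma> \<upsilon> p x =
     exp \<gamma> * \<upsilon> * x powr (\<upsilon> - 1) / (1 + exp \<gamma> * x powr \<upsilon>)\<^sup>2
       * (1 + p * (ln (1 + exp \<gamma> * x powr \<upsilon>) - 1))"

end

theory Submission
  imports Defs
begin

lemma ratio_eq:
  fixes \<gamma> \<upsilon> p1 p2 x :: real
  assumes "\<upsilon> > 0" "x > 0" "0 < p2" "p2 < 1"
  shows "rbtll_pdf \<gamma> \<upsilon> p1 x / rbtll_pdf \<gamma> \<upsilon> p2 x
     = (1 + p1 * (ln (1 + exp \<gamma> * x powr \<upsilon>) - 1)) / (1 + p2 * (ln (1 + exp \<gamma> * x powr \<upsilon>) - 1))"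
proof -
  define A where "A = exp \<gamma> * \<upsilon> * x powr (\<upsilon> - 1) / (1 + exp \<gamma> * x powr \<upsilon>)\<^sup>2"
  have "1 + exp \<gamma> * x powr \<upsilon> > 0" using assms by (simp add: add_pos_pos)
  then have "A > 0" unfolding A_def using assms by simp
  show ?thesis unfolding rbtll_pdf_def A_def[symmetric] using \<open>A > 0\<close> by simp
qed

lemma h_anti:
  fixes p1 p2 a b :: real
  assumes "0 < p1" "p1 < p2" "p2 < 1" "0 \<le> a" "a \<le> b"
  shows "(1 + p1 * (b - 1)) / (1 + p2 * (b - 1)) \<le> (1 + p1 * (a - 1)) / (1 + p2 * (a - 1))"
proof -
  have "a * p2 \<ge> 0" "b * p2 \<ge> 0" using assms by auto
  moreover have "1 + p2 * (a - 1) = (1 - p2) + a * p2" "1 + p2 * (b - 1) = (1 - p2) + b * p2"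
    by (simp_all add: algebra_simps)
  ultimately have da: "1 + p2 * (a - 1) > 0" and db: "1 + p2 * (b - 1) > 0" using assms
    by linarith+
  have "(1 + p1 * (b - 1)) * (1 + p2 * (a - 1)) - (1 + p1 * (a - 1)) * (1 + p2 * (b - 1))
        = (p1 - p2) * (b - a)" by (simp add: algebra_simps)
  also have "\<dots> \<le> 0" using assms by (simp add: mult_nonpos_nonneg)
  finally have "(1 + p1 * (b - 1)) * (1 + p2 * (a - 1)) \<le> (1 + p1 * (a - 1)) * (1 + p2 * (b - 1))" by simp
  then show ?thesis using da db by (simp add: frac_le_eq divide_le_0_iff)
qed
theorem theorem1:
  fixes \<gamma> \<upsilon> p1 p2 :: real
  assumes "\<gamma> > 0" and "\<upsilon> > 0" and "0 < p1" and "p1 < p2" and "p2 < 1"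
  shows "antimono_on {0<..} (\<lambda>x. rbtll_pdf \<gamma> \<upsilon> p1 x / rbtll_pdf \<gamma> \<upsilon> p2 x)"
proof (rule monotone_onI)
  fix x y :: real
  assume x: "x \<in> {0<..}" and y: "y \<in> {0<..}" and xy: "x \<le> y"
  have "x powr \<upsilon> \<le> y powr \<upsilon>" using x xy assms by (simp add: powr_mono2)
  then have "1 + exp \<gamma> * x powr \<upsilon> \<le> 1 + exp \<gamma> * y powr \<upsilon>" by simp
  moreover have "0 < 1 + exp \<gamma> * x powr \<upsilon>" by (simp add: add_pos_nonneg)
  ultimately have le: "ln (1 + exp \<gamma> * x powr \<upsilon>) \<le> ln (1 + exp \<gamma> * y powr \<upsilon>)"
    using ln_le_cancel_iff by (meson ln_mono)
  have nn: "0 \<le> ln (1 + exp \<gamma> * x powr \<upsilon>)" using x by simp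
  show "rbtll_pdf \<gamma> \<upsilon> p1 y / rbtll_pdf \<gamma> \<upsilon> p2 y \<le> rbtll_pdf \<gamma> \<upsilon> p1 x / rbtll_pdf \<gamma> \<upsilon> p2 x"
    using ratio_eq[of \<upsilon> x p2 \<gamma> p1] ratio_eq[of \<upsilon> y p2 \<gamma> p1] x y assms
      h_anti[OF assms(3,4,5) nn le] by simp
qed

end
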